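(* Let $A$ be a basic connected finite dimensional algebra over an algebraically closed field $k$ with ordinary quiver $Q$ without oriented cycles. Let $\nu\colon kQ\twoheadrightarrow A$ be a presentation, $D\colon kQ\xrightarrow{\sim}kQ$ a dilatation, and $\mu:=\nu\circ D$. Let $I=\mathsf{Ker}(\mu)$ and $J=\mathsf{Ker}(\nu)$, so that $J=D(I)$ and (since $\sim_I=\sim_J$) $\pi_1(Q,I)=\pi_1(Q,J)$. Then $\theta_\mu=\theta_\nu$.
   Context: Fix a complete set $e_1,\dots,e_n$ of primitive orthogonal idempotents of $A$ indexed by $Q_0=\{1,\dots,n\}$, $E=\bigoplus ke_i$. A presentation is a surjective algebra map $\nu\colon kQ\twoheadrightarrow A$ with admissible kernel ($(kQ^+)^N\subseteq\mathsf{Ker}\,\nu\subseteq(kQ^+)^2$ for some $N\ge2$, $kQ^+$ the arrow ideal) and $\nu(e_i)=e_i$. A dilatation is an automorphism $D$ of $kQ$ with $D(e_i)=e_i$ for all $i$ and $D(\alpha)\in k\alpha$ for every arrow $\alpha$; it is known that if $J=D(I)$ then the homotopy relations $\sim_I$ and $\sim_J$ coincide. $\mathsf{HH}^1(A)=Der_0(A)/Int_0(A)$, with $Der_0(A)$ the derivations vanishing on all $e_i$ and $Int_0(A)=\{a\mapsto ea-ae\mid e\in E\}$. Walks: paths with formal inverse arrows allowed. $\sim_I$ is the smallest equivalence relation on walks with $\alpha\alpha^{-1}\sim_I e_y$, $\alpha^{-1}\alpha\sim_I e_x$ for arrows $\alpha\colon x\to y$, compatible with concatenation, and identifying two paths occurring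 with nonzero coefficient in a same minimal relation of $I$ (a nonzero $\sum t_iu_i\in I$, $t_i\neq0$, distinct paths, no nonempty proper subsum in $I$). $\pi_1(Q,I)$ is the group of classes of closed walks at a fixed vertex $x_0$. Fix a maximal tree $T$ of $Q$, $\gamma_x$ the minimal walk in $T$ from $x_0$ to $x$. For a presentation $\nu$ with kernel $I$ and a group homomorphism $f\colon\pi_1(Q,I)\to k^+$, $\theta_\nu(f)$ is the class of the derivation $\tilde f$ with $\tilde f(\nu(u))=f([\gamma_y^{-1}u\gamma_x]_I)\nu(u)$ for paths $u$ from $x$ to $y$. *)

theory Defs
  imports "HOL-Computational_Algebra.Polynomial" "HOL-Algebra.Group"
begin

record ('v, 'a) quiver =
  verts :: "'v set"
  arrs  :: "'a set"
  src   :: "'a \<Rightarrow> 'v"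
  tgt   :: "'a \<Rightarrow> 'v"

text \<open>A path is a start vertex together with its list of arrows in traversal order;
  the trivial path e_x is (x, []).\<close>
type_synonym ('v, 'a) qpath = "'v \<times> 'a list"

definition is_path :: "('v, 'a) quiver \<Rightarrow> ('v, 'a) qpath \<Rightarrow> bool" where
  "is_path Q p \<longleftrightarrow> fst p \<in> verts Q \<and> set (snd p) \<subseteq> arrs Q \<and>
     (snd p \<noteq> [] \<longrightarrow> src Q (hd (snd p)) = fst p) \<and>
     (\<forall>i. Suc i < length (snd p) \<longrightarrow> tgt Q (snd p ! i) = src Q (snd p ! Suc i))"

definition path_end :: "('v, 'a) quiver \<Rightarrow> ('v, 'a) qpath \<Rightarrow> 'v" where
  "path_end Q p = (if snd p = [] then fst p else tgt Q (last (snd p)))"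

text \<open>A walk: start vertex and a list of steps (arrow, direction); True = the arrow,
  False = its formal inverse.\<close>
type_synonym ('v, 'a) walk = "'v \<times> ('a \<times> bool) list"

definition step_src :: "('v, 'a) quiver \<Rightarrow> 'a \<times> bool \<Rightarrow> 'v" where
  "step_src Q s = (if snd s then src Q (fst s) else tgt Q (fst s))"

definition step_tgt :: "('v, 'a) quiver \<Rightarrow> 'a \<times> bool \<Rightarrow> 'v" where
  "step_tgt Q s = (if snd s then tgt Q (fst s) else src Q (fst s))"

definition is_walk :: "('v, 'a) quiver \<Rightarrow> ('v, 'a) walk \<Rightarrow> bool" where
  "is_walk Q w \<longleftrightarrow> fst w \<in> verts Q \<and> fst ` set (snd w) \<subseteq> arrs Q \<and>
     (snd w \<noteq> [] \<longrightarrow> step_src Q (hd (snd w)) = fst w) \<and>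
     (\<forall>i. Suc i < length (snd w) \<longrightarrow> step_tgt Q (snd w ! i) = step_src Q (snd w ! Suc i))"

definition walk_end :: "('v, 'a) quiver \<Rightarrow> ('v, 'a) walk \<Rightarrow> 'v" where
  "walk_end Q w = (if snd w = [] then fst w else step_tgt Q (last (snd w)))"

definition wconcat :: "('v, 'a) walk \<Rightarrow> ('v, 'a) walk \<Rightarrow> ('v, 'a) walk" where
  "wconcat w v = (fst w, snd w @ snd v)"

definition winv :: "('v, 'a) quiver \<Rightarrow> ('v, 'a) walk \<Rightarrow> ('v, 'a) walk" where
  "winv Q w = (walk_end Q w, rev (map (\<lambda>(a, b). (a, \<not> b)) (snd w)))"

definition path_walk :: "('v, 'a) qpath \<Rightarrow> ('v, 'a) walk" where
  "path_walk p = (fst p, map (\<lambda>a. (a, True)) (snd p))"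

definition reduced_walk :: "('v, 'a) walk \<Rightarrow> bool" where
  "reduced_walk w \<longleftrightarrow> (\<forall>i. Suc i < length (snd w) \<longrightarrow>
      \<not> (fst (snd w ! i) = fst (snd w ! Suc i) \<and> snd (snd w ! i) \<noteq> snd (snd w ! Suc i)))"

definition finite_quiver :: "('v, 'a) quiver \<Rightarrow> bool" where
  "finite_quiver Q \<longleftrightarrow> finite (verts Q) \<and> finite (arrs Q) \<and>
     (\<forall>a\<in>arrs Q. src Q a \<in> verts Q \<and> tgt Q a \<in> verts Q)"

definition connected_quiver :: "('v, 'a) quiver \<Rightarrow> bool" where
  "connected_quiver Q \<longleftrightarrow> verts Q \<noteq> {} \<and>
     (\<forall>x\<in>verts Q. \<forall>y\<in>verts Q. \<exists>w. is_walk Q w \<and> fst w = x \<and> walk_end Q w = y)"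

definition no_oriented_cycles :: "('v, 'a) quiver \<Rightarrow> bool" where
  "no_oriented_cycles Q \<longleftrightarrow> (\<forall>p. is_path Q p \<and> snd p \<noteq> [] \<longrightarrow> path_end Q p \<noteq> fst p)"

definition spanning_tree :: "('v, 'a) quiver \<Rightarrow> 'a set \<Rightarrow> bool" where
  "spanning_tree Q T \<longleftrightarrow> T \<subseteq> arrs Q \<and>
     (\<forall>x\<in>verts Q. \<forall>y\<in>verts Q. \<exists>w. is_walk Q w \<and> fst ` set (snd w) \<subseteq> T \<and>
         fst w = x \<and> walk_end Q w = y) \<and>
     (\<forall>w. is_walk Q w \<and> fst ` set (snd w) \<subseteq> T \<and> reduced_walk w \<and> walk_end Q w = fst w
          \<longrightarrow> snd w = [])"

definition tree_walk :: "('v, 'a) quiver \<Rightarrow> 'a set \<Rightarrow> 'v \<Rightarrow> 'v \<Rightarrow> ('v, 'a) walk" where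
  "tree_walk Q T x0 x = (THE w. is_walk Q w \<and> fst ` set (snd w) \<subseteq> T \<and> reduced_walk w \<and>
      fst w = x0 \<and> walk_end Q w = x)"

definition pathalg :: "('v, 'a) quiver \<Rightarrow> (('v, 'a) qpath \<Rightarrow> 'k::field) set" where
  "pathalg Q = {c. (\<forall>p. c p \<noteq> 0 \<longrightarrow> is_path Q p) \<and> finite {p. c p \<noteq> 0}}"

definition delta :: "('v, 'a) qpath \<Rightarrow> ('v, 'a) qpath \<Rightarrow> 'k::field" where
  "delta p = (\<lambda>q. if q = p then 1 else 0)"

definition padd :: "(('v, 'a) qpath \<Rightarrow> 'k::field) \<Rightarrow> (('v, 'a) qpath \<Rightarrow> 'k) \<Rightarrow> ('v, 'a) qpath \<Rightarrow> 'k" where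
  "padd c d = (\<lambda>p. c p + d p)"

definition pscale :: "'k::field \<Rightarrow> (('v, 'a) qpath \<Rightarrow> 'k) \<Rightarrow> ('v, 'a) qpath \<Rightarrow> 'k" where
  "pscale a c = (\<lambda>p. a * c p)"

text \<open>Product (composition convention): for paths, u*v is "first v, then u".\<close>
definition pmult :: "('v, 'a) quiver \<Rightarrow> (('v, 'a) qpath \<Rightarrow> 'k::field) \<Rightarrow> (('v, 'a) qpath \<Rightarrow> 'k)
    \<Rightarrow> ('v, 'a) qpath \<Rightarrow> 'k" where
  "pmult Q c d = (\<lambda>r. if is_path Q r then
      (\<Sum>i\<le>length (snd r). c (path_end Q (fst r, take i (snd r)), drop i (snd r)) * d (fst r, take i (snd r)))
     else 0)"

definition pone :: "('v, 'a) quiver \<Rightarrow> ('v, 'a) qpath \<Rightarrow> 'k::field" where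
  "pone Q = (\<lambda>p. if is_path Q p \<and> snd p = [] then 1 else 0)"

definition arrow_ideal_pow :: "('v, 'a) quiver \<Rightarrow> nat \<Rightarrow> (('v, 'a) qpath \<Rightarrow> 'k::field) set" where
  "arrow_ideal_pow Q m = {c \<in> pathalg Q. \<forall>p. length (snd p) < m \<longrightarrow> c p = 0}"

definition admissible :: "('v, 'a) quiver \<Rightarrow> (('v, 'a) qpath \<Rightarrow> 'k::field) set \<Rightarrow> bool" where
  "admissible Q I \<longleftrightarrow> (\<exists>N\<ge>2. arrow_ideal_pow Q N \<subseteq> I \<and> I \<subseteq> arrow_ideal_pow Q 2)"

definition k_algebra :: "('k::field \<Rightarrow> 'b::ring_1 \<Rightarrow> 'b) \<Rightarrow> bool" where
  "k_algebra sc \<longleftrightarrow> (\<forall>a x y. sc a (x + y) = sc a x + sc a y) \<and>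
     (\<forall>a b x. sc (a + b) x = sc a x + sc b x) \<and>
     (\<forall>a b x. sc (a * b) x = sc a (sc b x)) \<and> (\<forall>x. sc 1 x = x) \<and>
     (\<forall>a x y. sc a (x * y) = sc a x * y \<and> sc a (x * y) = x * sc a y)"

definition kQ_alg_hom :: "('v, 'a) quiver \<Rightarrow> ('k::field \<Rightarrow> 'b::ring_1 \<Rightarrow> 'b)
    \<Rightarrow> ((('v, 'a) qpath \<Rightarrow> 'k) \<Rightarrow> 'b) \<Rightarrow> bool" where
  "kQ_alg_hom Q sc \<phi> \<longleftrightarrow>
     (\<forall>c\<in>pathalg Q. \<forall>d\<in>pathalg Q. \<phi> (padd c d) = \<phi> c + \<phi> d \<and> \<phi> (pmult Q c d) = \<phi> c * \<phi> d) \<and>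
     (\<forall>a. \<forall>c\<in>pathalg Q. \<phi> (pscale a c) = sc a (\<phi> c)) \<and> \<phi> (pone Q) = 1"

definition ker_on :: "('v, 'a) quiver \<Rightarrow> ((('v, 'a) qpath \<Rightarrow> 'k::field) \<Rightarrow> 'b::zero)
    \<Rightarrow> (('v, 'a) qpath \<Rightarrow> 'k) set" where
  "ker_on Q \<phi> = {c \<in> pathalg Q. \<phi> c = 0}"

definition presentation :: "('v, 'a) quiver \<Rightarrow> ('k::field \<Rightarrow> 'b::ring_1 \<Rightarrow> 'b) \<Rightarrow> ('v \<Rightarrow> 'b)
    \<Rightarrow> ((('v, 'a) qpath \<Rightarrow> 'k) \<Rightarrow> 'b) \<Rightarrow> bool" where
  "presentation Q sc e \<nu> \<longleftrightarrow> kQ_alg_hom Q sc \<nu> \<and> \<nu> ` pathalg Q = UNIV \<and>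
     admissible Q (ker_on Q \<nu>) \<and> (\<forall>x\<in>verts Q. \<nu> (delta (x, [])) = e x)"

definition dilatation :: "('v, 'a) quiver \<Rightarrow> ((('v, 'a) qpath \<Rightarrow> 'k::field) \<Rightarrow> (('v, 'a) qpath \<Rightarrow> 'k)) \<Rightarrow> bool" where
  "dilatation Q D \<longleftrightarrow> bij_betw D (pathalg Q) (pathalg Q) \<and>
     (\<forall>c\<in>pathalg Q. \<forall>d\<in>pathalg Q. D (padd c d) = padd (D c) (D d) \<and> D (pmult Q c d) = pmult Q (D c) (D d)) \<and>
     (\<forall>a. \<forall>c\<in>pathalg Q. D (pscale a c) = pscale a (D c)) \<and> D (pone Q) = pone Q \<and>
     (\<forall>x\<in>verts Q. D (delta (x, [])) = delta (x, [])) \<and>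
     (\<forall>\<alpha>\<in>arrs Q. \<exists>a. D (delta (src Q \<alpha>, [\<alpha>])) = pscale a (delta (src Q \<alpha>, [\<alpha>])))"

definition minimal_relation :: "(('v, 'a) qpath \<Rightarrow> 'k::field) set \<Rightarrow> (('v, 'a) qpath \<Rightarrow> 'k) \<Rightarrow> bool" where
  "minimal_relation I \<rho> \<longleftrightarrow> \<rho> \<in> I \<and> (\<exists>p. \<rho> p \<noteq> 0) \<and>
     (\<forall>S. S \<subseteq> {p. \<rho> p \<noteq> 0} \<and> S \<noteq> {} \<and> S \<noteq> {p. \<rho> p \<noteq> 0} \<longrightarrow>
          (\<lambda>p. if p \<in> S then \<rho> p else 0) \<notin> I)"

inductive homot :: "('v, 'a) quiver \<Rightarrow> (('v, 'a) qpath \<Rightarrow> 'k::field) set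
    \<Rightarrow> ('v, 'a) walk \<Rightarrow> ('v, 'a) walk \<Rightarrow> bool" for Q I where
  refl: "is_walk Q w \<Longrightarrow> homot Q I w w"
| sym: "homot Q I w w' \<Longrightarrow> homot Q I w' w"
| trans: "homot Q I w w' \<Longrightarrow> homot Q I w' w'' \<Longrightarrow> homot Q I w w''"
| cancel1: "\<alpha> \<in> arrs Q \<Longrightarrow> homot Q I (src Q \<alpha>, [(\<alpha>, True), (\<alpha>, False)]) (src Q \<alpha>, [])"
| cancel2: "\<alpha> \<in> arrs Q \<Longrightarrow> homot Q I (tgt Q \<alpha>, [(\<alpha>, False), (\<alpha>, True)]) (tgt Q \<alpha>, [])"
| ctx: "homot Q I w w' \<Longrightarrow> is_walk Q u \<Longrightarrow> is_walk Q v \<Longrightarrow> walk_end Q u = fst w \<Longrightarrow>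
        walk_end Q w = fst v \<Longrightarrow> homot Q I (wconcat u (wconcat w v)) (wconcat u (wconcat w' v))"
| rel: "minimal_relation I \<rho> \<Longrightarrow> \<rho> u \<noteq> 0 \<Longrightarrow> \<rho> u' \<noteq> 0 \<Longrightarrow>
        homot Q I (path_walk u) (path_walk u')"

definition hclass :: "('v, 'a) quiver \<Rightarrow> (('v, 'a) qpath \<Rightarrow> 'k::field) set \<Rightarrow> ('v, 'a) walk
    \<Rightarrow> ('v, 'a) walk set" where
  "hclass Q I w = {w'. homot Q I w w'}"

definition pi1 :: "('v, 'a) quiver \<Rightarrow> (('v, 'a) qpath \<Rightarrow> 'k::field) set \<Rightarrow> 'v
    \<Rightarrow> ('v, 'a) walk set monoid" where
  "pi1 Q I x0 = \<lparr> carrier = hclass Q I ` {w. is_walk Q w \<and> fst w = x0 \<and> walk_end Q w = x0},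
      mult = (\<lambda>C D. {w. \<exists>c\<in>C. \<exists>d\<in>D. homot Q I (wconcat c d) w}),
      one = hclass Q I (x0, []) \<rparr>"

definition kplus :: "'k::field monoid" where
  "kplus = \<lparr> carrier = UNIV, mult = (+), one = 0 \<rparr>"

definition Der0 :: "('v, 'a) quiver \<Rightarrow> ('k::field \<Rightarrow> 'b::ring_1 \<Rightarrow> 'b) \<Rightarrow> ('v \<Rightarrow> 'b)
    \<Rightarrow> ('b \<Rightarrow> 'b) set" where
  "Der0 Q sc e = {d. (\<forall>x y. d (x + y) = d x + d y) \<and> (\<forall>a x. d (sc a x) = sc a (d x)) \<and>
      (\<forall>x y. d (x * y) = d x * y + x * d y) \<and> (\<forall>v\<in>verts Q. d (e v) = 0)}"

definition Int0 :: "('v, 'a) quiver \<Rightarrow> ('k::field \<Rightarrow> 'b::ring_1 \<Rightarrow> 'b) \<Rightarrow> ('v \<Rightarrow> 'b)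
    \<Rightarrow> ('b \<Rightarrow> 'b) set" where
  "Int0 Q sc e = {d. \<exists>c :: 'v \<Rightarrow> 'k. d = (\<lambda>a. (\<Sum>v\<in>verts Q. sc (c v) (e v)) * a
                                            - a * (\<Sum>v\<in>verts Q. sc (c v) (e v)))}"

definition HH1_class :: "('v, 'a) quiver \<Rightarrow> ('k::field \<Rightarrow> 'b::ring_1 \<Rightarrow> 'b) \<Rightarrow> ('v \<Rightarrow> 'b)
    \<Rightarrow> ('b \<Rightarrow> 'b) \<Rightarrow> ('b \<Rightarrow> 'b) set" where
  "HH1_class Q sc e d = {d' \<in> Der0 Q sc e. (\<lambda>a. d' a - d a) \<in> Int0 Q sc e}"

definition is_f_tilde :: "('v, 'a) quiver \<Rightarrow> ('k::field \<Rightarrow> 'b::ring_1 \<Rightarrow> 'b)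
    \<Rightarrow> ((('v, 'a) qpath \<Rightarrow> 'k) \<Rightarrow> 'b) \<Rightarrow> (('v, 'a) qpath \<Rightarrow> 'k) set \<Rightarrow> 'a set \<Rightarrow> 'v
    \<Rightarrow> (('v, 'a) walk set \<Rightarrow> 'k) \<Rightarrow> ('b \<Rightarrow> 'b) \<Rightarrow> bool" where
  "is_f_tilde Q sc \<nu> I T x0 f d \<longleftrightarrow>
     (\<forall>x y. d (x + y) = d x + d y) \<and> (\<forall>a x. d (sc a x) = sc a (d x)) \<and>
     (\<forall>u. is_path Q u \<longrightarrow>
        d (\<nu> (delta u)) =
          sc (f (hclass Q I (wconcat (tree_walk Q T x0 (fst u))
                  (wconcat (path_walk u) (winv Q (tree_walk Q T x0 (path_end Q u)))))))
             (\<nu> (delta u)))"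

definition theta :: "('v, 'a) quiver \<Rightarrow> ('k::field \<Rightarrow> 'b::ring_1 \<Rightarrow> 'b) \<Rightarrow> ('v \<Rightarrow> 'b)
    \<Rightarrow> ((('v, 'a) qpath \<Rightarrow> 'k) \<Rightarrow> 'b) \<Rightarrow> (('v, 'a) qpath \<Rightarrow> 'k) set \<Rightarrow> 'a set \<Rightarrow> 'v
    \<Rightarrow> (('v, 'a) walk set \<Rightarrow> 'k) \<Rightarrow> ('b \<Rightarrow> 'b) set" where
  "theta Q sc e \<nu> I T x0 f = HH1_class Q sc e (THE d. is_f_tilde Q sc \<nu> I T x0 f d)"

end

theory Submission
  imports Defs
begin

definition dscale :: "(('v, 'a) qpath \<Rightarrow> 'k::field) \<Rightarrow> (('v, 'a) qpath \<Rightarrow> 'k) \<Rightarrow> ('v, 'a) qpath \<Rightarrow> 'k" where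
  "dscale m c = (\<lambda>p. m p * c p)"

definition lincomb :: "('v, 'a) qpath set \<Rightarrow> (('v, 'a) qpath \<Rightarrow> 'k::field) \<Rightarrow> ('v, 'a) qpath \<Rightarrow> 'k" where
  "lincomb S k = (\<lambda>q. \<Sum>p\<in>S. k p * delta p q)"

lemma delta_in: "is_path Q p \<Longrightarrow> (delta p :: _ \<Rightarrow> 'k::field) \<in> pathalg Q"
  unfolding pathalg_def delta_def by auto

lemma zero_in: "(\<lambda>_. 0::'k::field) \<in> pathalg Q"
  unfolding pathalg_def by auto

lemma dscale_in: "(\<And>p. m p \<noteq> 0) \<Longrightarrow> c \<in> pathalg Q \<Longrightarrow> dscale m c \<in> pathalg Q"
  unfolding pathalg_def dscale_def by auto

lemma dscale_in': "c \<in> pathalg Q \<Longrightarrow> dscale m c \<in> pathalg Q"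
proof -
  assume c: "c \<in> pathalg Q"
  have "{p. dscale m c p \<noteq> 0} \<subseteq> {p. c p \<noteq> 0}" unfolding dscale_def by auto
  then show ?thesis using c unfolding pathalg_def by (auto intro: finite_subset simp: dscale_def)
qed

lemma pscale_in: "c \<in> pathalg Q \<Longrightarrow> pscale a c \<in> pathalg Q"
proof -
  assume c: "c \<in> pathalg Q"
  have "{p. pscale a c p \<noteq> 0} \<subseteq> {p. c p \<noteq> 0}" unfolding pscale_def by auto
  then show ?thesis using c unfolding pathalg_def by (auto intro: finite_subset simp: pscale_def)
qed

lemma lincomb_in:
  assumes "finite S" "\<forall>p\<in>S. is_path Q p"
  shows "lincomb S k \<in> pathalg Q"
proof -
  have "{q. lincomb S k q \<noteq> 0} \<subseteq> S"
  proof
    fix q assume "q \<in> {q. lincomb S k q \<noteq> 0}"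
    then have "(\<Sum>p\<in>S. k p * delta p q) \<noteq> 0" unfolding lincomb_def by simp
    then show "q \<in> S" by (metis (mono_tags, lifting) delta_def mult_zero_right sum.neutral)
  qed
  then show ?thesis using assms unfolding pathalg_def by (auto intro: finite_subset)
qed

lemma lincomb_self:
  assumes "c \<in> pathalg Q"
  shows "lincomb {p. c p \<noteq> 0} c = c"
proof
  fix q
  have fin: "finite {p. c p \<noteq> 0}" using assms unfolding pathalg_def by auto
  have "lincomb {p. c p \<noteq> 0} c q = (\<Sum>p\<in>{p. c p \<noteq> 0}. if q = p then c p else 0)"
    unfolding lincomb_def delta_def by (intro sum.cong) auto
  also have "\<dots> = c q" using fin by simp
  finally show "lincomb {p. c p \<noteq> 0} c q = c q" .
qed

lemma lincomb_insert:
  "finite S \<Longrightarrow> p \<notin> S \<Longrightarrow> lincomb (insert p S) k = padd (pscale (k p) (delta p)) (lincomb S k)"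
  unfolding lincomb_def padd_def pscale_def by auto

lemma pmult_pscale: "pmult Q (pscale a c) (pscale b d) = pscale (a*b) (pmult Q c d)"
  unfolding pmult_def pscale_def by (auto simp: sum_distrib_left mult_ac)

lemma is_path_snoc:
  assumes "is_path Q (x, as @ [\<alpha>])"
  shows "is_path Q (x, as)" "\<alpha> \<in> arrs Q" "path_end Q (x, as) = src Q \<alpha>"
proof -
  show "is_path Q (x, as)" using assms unfolding is_path_def
    by (auto simp: nth_append)
  show "\<alpha> \<in> arrs Q" using assms unfolding is_path_def by auto
  show "path_end Q (x, as) = src Q \<alpha>"
  proof (cases "as = []")
    case True then show ?thesis using assms unfolding is_path_def path_end_def by auto
  next
    case False
    then obtain n where n: "length as = Suc n" by (cases as) auto
    have "tgt Q ((as @ [\<alpha>]) ! n) = src Q ((as @ [\<alpha>]) ! Suc n)"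
      using assms n unfolding is_path_def by auto
    moreover have "(as @ [\<alpha>]) ! n = last as" using n False
      by (simp add: nth_append last_conv_nth)
    moreover have "(as @ [\<alpha>]) ! Suc n = \<alpha>" using n by (simp add: nth_append)
    ultimately show ?thesis using False unfolding path_end_def by simp
  qed
qed

lemma take_snoc_eq: "i \<le> Suc (length as) \<Longrightarrow> take i (as @ [a]) = as \<Longrightarrow> i = length as"
  by (drule arg_cong[where f=length]) (simp del: take_append)

lemma pmult_delta_snoc:
  assumes "is_path Q (x, as @ [\<alpha>])"
  shows "pmult Q (delta (src Q \<alpha>, [\<alpha>])) (delta (x, as)) = (delta (x, as @ [\<alpha>]) :: _ \<Rightarrow> 'k::field)"
proof
  fix r :: "('a, 'b) qpath"
  show "pmult Q (delta (src Q \<alpha>, [\<alpha>])) (delta (x, as)) r = (delta (x, as @ [\<alpha>]) r :: 'k)"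
  proof (cases "r = (x, as @ [\<alpha>])")
    case True
    have pe: "path_end Q (x, as) = src Q \<alpha>" using is_path_snoc(3)[OF assms] .
    have "pmult Q (delta (src Q \<alpha>, [\<alpha>])) (delta (x, as)) r =
      (\<Sum>i\<le>length (as @ [\<alpha>]). (if i = length as then 1 else 0 :: 'k))"
    proof -
      have t: "delta (src Q \<alpha>, [\<alpha>]) (path_end Q (x, take i (as @ [\<alpha>])), drop i (as @ [\<alpha>])) *
          delta (x, as) (x, take i (as @ [\<alpha>])) = (if i = length as then 1 else 0 :: 'k)"
        if "i \<in> {..length (as @ [\<alpha>])}" for i
      proof (cases "i = length as")
        case True then show ?thesis using pe by (simp add: delta_def)
      next
        case False
        then have "take i (as @ [\<alpha>]) \<noteq> as" using that take_snoc_eq[of i as \<alpha>] by auto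
        then show ?thesis using False by (simp add: delta_def)
      qed
      show ?thesis unfolding pmult_def True using assms
        by (simp only: if_True fst_conv snd_conv sum.cong[OF HOL.refl t])
    qed
    also have "\<dots> = 1" by simp
    finally show ?thesis using True by (simp add: delta_def)
  next
    case False
    have "pmult Q (delta (src Q \<alpha>, [\<alpha>])) (delta (x, as)) r = (0::'k)"
    proof -
      have "\<forall>i. delta (src Q \<alpha>, [\<alpha>]) (path_end Q (fst r, take i (snd r)), drop i (snd r)) *
               delta (x, as) (fst r, take i (snd r)) = (0::'k)"
      proof
        fix i
        show "delta (src Q \<alpha>, [\<alpha>]) (path_end Q (fst r, take i (snd r)), drop i (snd r)) *
               delta (x, as) (fst r, take i (snd r)) = (0::'k)"
        proof (rule ccontr)
          assume "\<not> ?thesis"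
          then have "drop i (snd r) = [\<alpha>]" "take i (snd r) = as" "fst r = x"
            unfolding delta_def by (auto split: if_splits)
          then have "r = (x, as @ [\<alpha>])" by (metis append_take_drop_id prod.collapse)
          then show False using False by simp
        qed
      qed
      then have "(\<Sum>i\<le>length (snd r). delta (src Q \<alpha>, [\<alpha>]) (path_end Q (fst r, take i (snd r)), drop i (snd r)) *
               delta (x, as) (fst r, take i (snd r))) = (0::'k)"
        by (intro sum.neutral ballI) blast
      then show ?thesis unfolding pmult_def by simp
    qed
    then show ?thesis using False by (simp add: delta_def)
  qed
qed


lemma dil_zero:
  assumes "dilatation Q D" shows "D (\<lambda>_. 0) = (\<lambda>_. (0::'k::field))"
proof -
  have z: "pscale 0 (\<lambda>_. 0::'k) = (\<lambda>_. 0 :: 'k)" unfolding pscale_def by simp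
  have "D (pscale 0 (\<lambda>_. 0)) = pscale 0 (D (\<lambda>_. 0))"
    using assms zero_in unfolding dilatation_def by blast
  then show ?thesis unfolding z by (simp add: pscale_def)
qed

lemma pscale_one: "pscale 1 c = c" unfolding pscale_def by simp

lemma dil_delta:
  assumes dil: "dilatation Q D" and fq: "\<forall>a\<in>arrs Q. src Q a \<in> verts Q \<and> tgt Q a \<in> verts Q"
    and p: "is_path Q (x, as)"
  shows "\<exists>a. a \<noteq> 0 \<and> D (delta (x, as)) = pscale a (delta (x, as) :: _ \<Rightarrow> 'k::field)"
  using p
proof (induction as rule: rev_induct)
  case Nil
  then have "x \<in> verts Q" unfolding is_path_def by auto
  then show ?case using dil unfolding dilatation_def by (intro exI[of _ 1]) (auto simp: pscale_one)
next
  case (snoc \<alpha> as)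
  have p0: "is_path Q (x, as)" "\<alpha> \<in> arrs Q" "path_end Q (x, as) = src Q \<alpha>"
    using is_path_snoc[OF snoc.prems] by auto
  obtain a where a: "a \<noteq> 0" "D (delta (x, as)) = pscale a (delta (x, as) :: _ \<Rightarrow> 'k)"
    using snoc.IH[OF p0(1)] by blast
  have pa: "is_path Q (src Q \<alpha>, [\<alpha>])" using fq p0(2) unfolding is_path_def by auto
  obtain b where b: "D (delta (src Q \<alpha>, [\<alpha>])) = pscale b (delta (src Q \<alpha>, [\<alpha>]) :: _ \<Rightarrow> 'k)"
    using dil p0(2) unfolding dilatation_def by blast
  have "b \<noteq> 0"
  proof
    assume "b = 0"
    then have "D (delta (src Q \<alpha>, [\<alpha>])) = D (\<lambda>_. 0 :: 'k)" using b dil_zero[OF dil]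
      by (simp add: pscale_def)
    then have "delta (src Q \<alpha>, [\<alpha>]) = (\<lambda>_. 0 :: 'k)"
      using dil delta_in[OF pa] zero_in unfolding dilatation_def bij_betw_def inj_on_def by blast
    then have "delta (src Q \<alpha>, [\<alpha>]) (src Q \<alpha>, [\<alpha>]) = (0::'k)" by simp
    then show False unfolding delta_def by simp
  qed
  have "D (delta (x, as @ [\<alpha>])) = D (pmult Q (delta (src Q \<alpha>, [\<alpha>])) (delta (x, as)) :: _ \<Rightarrow> 'k)"
    by (rule arg_cong[where f=D], rule pmult_delta_snoc[OF snoc.prems, symmetric])
  also have "\<dots> = pmult Q (D (delta (src Q \<alpha>, [\<alpha>]))) (D (delta (x, as)))"
    using dil delta_in[OF pa] delta_in[OF p0(1)] unfolding dilatation_def by blast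
  also have "\<dots> = pscale (b * a) (delta (x, as @ [\<alpha>]))"
    unfolding a b pmult_pscale pmult_delta_snoc[OF snoc.prems] ..
  finally show ?case using a(1) \<open>b \<noteq> 0\<close> by (intro exI[of _ "b * a"]) simp
qed


lemma lincomb_apply: "finite S \<Longrightarrow> lincomb S g q = (if q \<in> S then g q else 0)"
proof -
  assume fin: "finite S"
  have "lincomb S g q = (\<Sum>p\<in>S. if q = p then g p else 0)"
    unfolding lincomb_def delta_def by (intro sum.cong) auto
  also have "\<dots> = (if q \<in> S then g q else 0)" using fin by simp
  finally show ?thesis .
qed

lemma pscale_pscale: "pscale a (pscale b c) = pscale (a * b) c"
  unfolding pscale_def by (simp add: mult_ac)

lemma dil_diag:
  assumes dil: "dilatation Q D" and fq: "\<forall>a\<in>arrs Q. src Q a \<in> verts Q \<and> tgt Q a \<in> verts Q"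
  shows "\<exists>m. (\<forall>p. m p \<noteq> (0::'k::field)) \<and> (\<forall>c\<in>pathalg Q. D c = dscale m c)"
proof -
  define m :: "_ \<Rightarrow> 'k" where "m p = (if is_path Q p then SOME a. a \<noteq> 0 \<and> D (delta p) = pscale a (delta p) else 1)" for p
  have m2: "m p \<noteq> 0 \<and> D (delta p) = pscale (m p) (delta p)" if "is_path Q p" for p
  proof -
    have "\<exists>a. a \<noteq> 0 \<and> D (delta (fst p, snd p)) = pscale a (delta (fst p, snd p) :: _ \<Rightarrow> 'k)"
      using dil_delta[OF dil fq, of "fst p" "snd p"] that by simp
    then have "\<exists>a. a \<noteq> 0 \<and> D (delta p) = pscale a (delta p :: _ \<Rightarrow> 'k)" by simp
    then have "?this" by simp
    from someI_ex[OF this] show ?thesis unfolding m_def using that by simp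
  qed
  have m1: "\<forall>p. m p \<noteq> 0" using m2 unfolding m_def by auto
  have lc: "D (lincomb S k) = lincomb S (\<lambda>p. k p * m p)" if "finite S" "\<forall>p\<in>S. is_path Q p" for S k
    using that
  proof (induction S rule: finite_induct)
    case empty
    have "lincomb {} k = (\<lambda>_. 0::'k)" "lincomb {} (\<lambda>p. k p * m p) = (\<lambda>_. 0::'k)"
      unfolding lincomb_def by auto
    then show ?case using dil_zero[OF dil] by simp
  next
    case (insert p S)
    have pp: "is_path Q p" using insert.prems by auto
    have "D (lincomb (insert p S) k) = D (padd (pscale (k p) (delta p)) (lincomb S k))"
      by (rule arg_cong[where f=D], rule lincomb_insert[OF insert.hyps])
    also have "\<dots> = padd (D (pscale (k p) (delta p))) (D (lincomb S k))"
    proof -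
      have "lincomb S k \<in> pathalg Q" using lincomb_in[OF insert.hyps(1)] insert.prems by auto
      moreover have "pscale (k p) (delta p) \<in> pathalg Q" using pscale_in[OF delta_in[OF pp]] .
      ultimately show ?thesis using dil unfolding dilatation_def by blast
    qed
    also have "D (pscale (k p) (delta p)) = pscale (k p) (D (delta p))"
      using dil delta_in[OF pp] unfolding dilatation_def by blast
    also have "\<dots> = pscale (k p * m p) (delta p)" using m2[OF pp] by (simp add: pscale_pscale)
    also have "D (lincomb S k) = lincomb S (\<lambda>p. k p * m p)" using insert by auto
    finally show ?case by (rule HOL.trans[OF _ lincomb_insert[OF insert.hyps, symmetric]])
  qed
  have "D c = dscale m c" if c: "c \<in> pathalg Q" for c
  proof -
    have fin: "finite {p. c p \<noteq> 0}" and pth: "\<forall>p\<in>{p. c p \<noteq> 0}. is_path Q p"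
      using c unfolding pathalg_def by auto
    have "D c = D (lincomb {p. c p \<noteq> 0} c)" using lincomb_self[OF c] by simp
    also have "\<dots> = lincomb {p. c p \<noteq> 0} (\<lambda>p. c p * m p)" using lc[OF fin pth] .
    also have "\<dots> = dscale m c" unfolding dscale_def
      by (rule ext) (simp add: lincomb_apply[OF fin] mult.commute)
    finally show ?thesis .
  qed
  then show ?thesis using m1 by blast
qed


lemma minrel_transfer:
  assumes m: "\<forall>p. m p \<noteq> (0::'k::field)" and IP: "I \<subseteq> pathalg Q"
    and IJ: "\<forall>c\<in>pathalg Q. c \<in> I \<longleftrightarrow> dscale m c \<in> J"
    and mr: "minimal_relation I \<rho>"
  shows "minimal_relation J (dscale m \<rho>)"
proof -
  have rI: "\<rho> \<in> I" and ne: "\<exists>p. \<rho> p \<noteq> 0"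
    and mn: "\<forall>S. S \<subseteq> {p. \<rho> p \<noteq> 0} \<and> S \<noteq> {} \<and> S \<noteq> {p. \<rho> p \<noteq> 0} \<longrightarrow>
          (\<lambda>p. if p \<in> S then \<rho> p else 0) \<notin> I"
    using mr unfolding minimal_relation_def by auto
  have rP: "\<rho> \<in> pathalg Q" using rI IP by auto
  have supp: "{p. dscale m \<rho> p \<noteq> 0} = {p. \<rho> p \<noteq> 0}" using m unfolding dscale_def by auto
  have "dscale m \<rho> \<in> J" using IJ rI rP by auto
  moreover have "\<exists>p. dscale m \<rho> p \<noteq> 0" using ne m unfolding dscale_def by auto
  moreover have "(\<lambda>p. if p \<in> S then dscale m \<rho> p else 0) \<notin> J"
    if S: "S \<subseteq> {p. dscale m \<rho> p \<noteq> 0}" "S \<noteq> {}" "S \<noteq> {p. dscale m \<rho> p \<noteq> 0}" for S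
  proof -
    define r where "r = (\<lambda>p. if p \<in> S then \<rho> p else 0)"
    have rnI: "r \<notin> I" using mn S supp unfolding r_def by auto
    have "{p. r p \<noteq> 0} \<subseteq> {p. \<rho> p \<noteq> 0}" unfolding r_def by auto
    then have "r \<in> pathalg Q" using rP unfolding pathalg_def by (auto intro: finite_subset)
    then have "dscale m r \<notin> J" using IJ rnI by auto
    moreover have "dscale m r = (\<lambda>p. if p \<in> S then dscale m \<rho> p else 0)"
      unfolding r_def dscale_def by auto
    ultimately show ?thesis by simp
  qed
  ultimately show ?thesis unfolding minimal_relation_def by blast
qed

lemma homot_transfer:
  assumes tr: "\<forall>\<rho>. minimal_relation I \<rho> \<longrightarrow> minimal_relation J (dscale m \<rho>)"
    and m: "\<forall>p. m p \<noteq> (0::'k::field)"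
    and h: "homot Q I w w'"
  shows "homot Q J w w'"
  using h
proof (induction rule: homot.induct)
  case (refl w) then show ?case by (rule homot.refl)
next
  case (sym w w') then show ?case by (blast intro: homot.sym)
next
  case (trans w w' w'') then show ?case by (blast intro: homot.trans)
next
  case (cancel1 \<alpha>) then show ?case by (rule homot.cancel1)
next
  case (cancel2 \<alpha>) then show ?case by (rule homot.cancel2)
next
  case (ctx w w' u v) then show ?case by (simp add: homot.ctx)
next
  case (rel \<rho> u u')
  have "minimal_relation J (dscale m \<rho>)" using tr rel by blast
  moreover have "dscale m \<rho> u \<noteq> 0" "dscale m \<rho> u' \<noteq> 0" using rel m unfolding dscale_def by (simp_all del: split_paired_All)
  ultimately show ?case by (rule homot.rel)
qed

lemma sc_cancel:
  assumes ka: "k_algebra sc" and dl: "\<forall>a x. d (sc a x) = sc a (d x)" and a: "a \<noteq> 0"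
  shows "(d (sc a x) = sc s (sc a x)) \<longleftrightarrow> (d x = sc (s::'k::field) (x::'b::ring_1))"
proof -
  have mul: "sc (a * b) y = sc a (sc b y)" and one: "sc 1 y = y" for a b and y :: 'b
    using ka unfolding k_algebra_def by auto
  have inv: "sc (inverse a) (sc a y) = y" for y
    using mul[of "inverse a" a y] one a by simp
  have "sc s (sc a x) = sc a (sc s x)" using mul[of s a x] mul[of a s x] by (simp add: mult.commute)
  then have "(d (sc a x) = sc s (sc a x)) \<longleftrightarrow> (sc a (d x) = sc a (sc s x))" using dl by simp
  also have "\<dots> \<longleftrightarrow> d x = sc s x" using inv by metis
  finally show ?thesis .
qed

theorem proposition3p1:
  fixes Q :: "('v, 'a) quiver"
    and sc :: "'k::alg_closed_field \<Rightarrow> 'b::ring_1 \<Rightarrow> 'b"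
    and e :: "'v \<Rightarrow> 'b"
    and \<nu> :: "(('v, 'a) qpath \<Rightarrow> 'k) \<Rightarrow> 'b"
    and D :: "(('v, 'a) qpath \<Rightarrow> 'k) \<Rightarrow> (('v, 'a) qpath \<Rightarrow> 'k)"
    and T :: "'a set" and x0 :: 'v
  assumes "finite_quiver Q" and "connected_quiver Q" and "no_oriented_cycles Q"
    and "k_algebra sc"
    and "presentation Q sc e \<nu>"
    and "dilatation Q D"
    and "spanning_tree Q T" and "x0 \<in> verts Q"
  shows "\<forall>f \<in> hom (pi1 Q (ker_on Q (\<nu> \<circ> D)) x0) kplus.
           theta Q sc e (\<nu> \<circ> D) (ker_on Q (\<nu> \<circ> D)) T x0 f = theta Q sc e \<nu> (ker_on Q \<nu>) T x0 f"
proof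
  fix f
  define I where "I = ker_on Q (\<nu> \<circ> D)"
  define J where "J = ker_on Q \<nu>"
  have fq: "\<forall>a\<in>arrs Q. src Q a \<in> verts Q \<and> tgt Q a \<in> verts Q"
    using assms(1) unfolding finite_quiver_def by auto
  have dil: "dilatation Q D" by fact
  obtain m :: "_ \<Rightarrow> 'k" where m: "\<forall>p. m p \<noteq> 0" and Dm: "\<forall>c\<in>pathalg Q. D c = dscale m c"
    using dil_diag[OF dil fq] by blast
  have hom: "kQ_alg_hom Q sc \<nu>" using assms(5) unfolding presentation_def by auto
  have IP: "I \<subseteq> pathalg Q" and JP: "J \<subseteq> pathalg Q" unfolding I_def J_def ker_on_def by auto
  have IJ: "\<forall>c\<in>pathalg Q. c \<in> I \<longleftrightarrow> dscale m c \<in> J"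
    using Dm dscale_in'[of _ Q m] unfolding I_def J_def ker_on_def by auto
  define m' where "m' p = inverse (m p)" for p
  have m': "\<forall>p. m' p \<noteq> 0" using m unfolding m'_def by auto
  have mm': "dscale m (dscale m' c) = c" for c :: "_ \<Rightarrow> 'k"
    using m unfolding m'_def dscale_def by (auto simp: fun_eq_iff)
  have JI: "\<forall>c\<in>pathalg Q. c \<in> J \<longleftrightarrow> dscale m' c \<in> I"
  proof
    fix c :: "_ \<Rightarrow> 'k" assume c: "c \<in> pathalg Q"
    have "dscale m' c \<in> pathalg Q" using dscale_in'[OF c] .
    then have "dscale m' c \<in> I \<longleftrightarrow> dscale m (dscale m' c) \<in> J" using IJ by blast
    then show "c \<in> J \<longleftrightarrow> dscale m' c \<in> I" unfolding mm' by simp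
  qed
  have h1: "homot Q I w w' \<Longrightarrow> homot Q J w w'" for w w'
    using homot_transfer[of I J m] minrel_transfer[OF m IP IJ] m by blast
  have h2: "homot Q J w w' \<Longrightarrow> homot Q I w w'" for w w'
    using homot_transfer[of J I m'] minrel_transfer[OF m' JP JI] m' by blast
  have hc: "hclass Q I = hclass Q J"
    unfolding hclass_def using h1 h2 by (auto simp: fun_eq_iff)
  have nuD: "(\<nu> \<circ> D) (delta u) = sc (m u) (\<nu> (delta u))" if u: "is_path Q u" for u
  proof -
    have "D (delta u) = dscale m (delta u)" using Dm delta_in[OF u] by blast
    also have "\<dots> = pscale (m u) (delta u)" unfolding dscale_def pscale_def delta_def by auto
    moreover have "\<nu> (pscale (m u) (delta u)) = sc (m u) (\<nu> (delta u))"
      using hom delta_in[OF u] unfolding kQ_alg_hom_def by blast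
    ultimately show ?thesis by simp
  qed
  have eq: "is_f_tilde Q sc (\<nu> \<circ> D) I T x0 f d \<longleftrightarrow> is_f_tilde Q sc \<nu> J T x0 f d" for d
  proof (cases "(\<forall>x y. d (x + y) = d x + d y) \<and> (\<forall>a x. d (sc a x) = sc a (d x))")
    case True
    then have dl: "\<forall>a x. d (sc a x) = sc a (d x)" by blast
    have "\<And>u. is_path Q u \<Longrightarrow>
        (d ((\<nu> \<circ> D) (delta u)) = sc (f (hclass Q I (wconcat (tree_walk Q T x0 (fst u))
                  (wconcat (path_walk u) (winv Q (tree_walk Q T x0 (path_end Q u))))))) ((\<nu> \<circ> D) (delta u)))
        \<longleftrightarrow> (d (\<nu> (delta u)) = sc (f (hclass Q J (wconcat (tree_walk Q T x0 (fst u))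
                  (wconcat (path_walk u) (winv Q (tree_walk Q T x0 (path_end Q u))))))) (\<nu> (delta u)))"
    proof -
      fix u assume u: "is_path Q u"
      have mu: "m u \<noteq> 0" using m by blast
      show "?thesis u" unfolding hc nuD[OF u] by (rule sc_cancel[OF assms(4) dl mu])
    qed
    then show ?thesis using True unfolding is_f_tilde_def by blast
  next
    case False
    then show ?thesis unfolding is_f_tilde_def by blast
  qed
  show "theta Q sc e (\<nu> \<circ> D) (ker_on Q (\<nu> \<circ> D)) T x0 f = theta Q sc e \<nu> (ker_on Q \<nu>) T x0 f"
    unfolding theta_def I_def[symmetric] J_def[symmetric] eq ..
qed

end
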